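(* Let $G$ be a group and let $A,S$ be finite nonempty subsets of $G$ with $1\in S$. Put $K=\langle S\rangle$ and let $A=\bigcup_{i\in I}A_i$ be the left $K$-decomposition of $A$ (the $A_i$ are the nonempty intersections of $A$ with left cosets $aK$). Put $W=\{i\in I: |A_iS|<|K|\}$. Then $|W|\,\kappa_1(S)\le |AS|-|A|$; equivalently, if $\kappa_1(S)>0$, $|W|\le \frac{|AS|-|A|}{\kappa_1(S)}$.
   Context: For a group $G$ and $S\subseteq G$, $\mathrm{Cay}(G,S)$ is the graph on $G$ with arcs $(x,y)$, $x^{-1}y\in S$; the image of $X$ is $XS$. For a reflexive locally finite graph $\Gamma=(V,E)$, $\partial(X)=\Gamma(X)\setminus X$; $\Gamma$ is $1$-separable if some finite nonempty $X$ has $V\setminus\Gamma(X)\ne\emptyset$; then $\kappa_1(\Gamma)=\min\{|\partial(X)|: X\text{ finite nonempty}, \Gamma(X)\ne V\}$; otherwise (and $|V|\ge1$) $\kappa_1(\Gamma)=|V|-1$ by convention. $\kappa_1(S)=\kappa_1(\mathrm{Cay}(\langle S\rangle,S))$, $\langle S\rangle$ being the subgroup generated by $S$. *)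

theory Defs
  imports "HOL-Algebra.Algebra"
begin

definition graph_boundary :: "('a \<times> 'a) set \<Rightarrow> 'a set \<Rightarrow> 'a set" where
  "graph_boundary Arc Y = Image Arc Y - Y"

definition kappa1_graph :: "'a set \<Rightarrow> ('a \<times> 'a) set \<Rightarrow> nat" where
  "kappa1_graph V Arc =
     (if \<exists>Y. finite Y \<and> Y \<noteq> {} \<and> Y \<subseteq> V \<and> Image Arc Y \<noteq> V
      then (INF Y\<in>{Y. finite Y \<and> Y \<noteq> {} \<and> Y \<subseteq> V \<and> Image Arc Y \<noteq> V}. card (graph_boundary Arc Y))
      else card V - 1)"

definition cay_arcs :: "('a, 'b) monoid_scheme \<Rightarrow> 'a set \<Rightarrow> 'a set \<Rightarrow> ('a \<times> 'a) set" where
  "cay_arcs G H S = {(x, y). x \<in> H \<and> y \<in> H \<and> inv\<^bsub>G\<^esub> x \<otimes>\<^bsub>G\<^esub> y \<in> S}"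

definition kappa1 :: "('a, 'b) monoid_scheme \<Rightarrow> 'a set \<Rightarrow> nat" where
  "kappa1 G S = kappa1_graph (generate G S) (cay_arcs G (generate G S) S)"

text \<open>Left K-decomposition of A: index set = left cosets aK meeting A; A_i = A \<inter> aK.\<close>
definition left_decomp_index :: "('a, 'b) monoid_scheme \<Rightarrow> 'a set \<Rightarrow> 'a set \<Rightarrow> 'a set set" where
  "left_decomp_index G K A = {a <#\<^bsub>G\<^esub> K | a. a \<in> carrier G \<and> A \<inter> (a <#\<^bsub>G\<^esub> K) \<noteq> {}}"

end

theory Submission
  imports Defs
begin

lemma per_coset:
  fixes G (structure)
  assumes grp: "group G" and SG: "S \<subseteq> carrier G" and one: "\<one>\<^bsub>G\<^esub> \<in> S"
    and Kd: "K = generate G S" and b: "b \<in> carrier G" and BK: "B \<subseteq> b <#\<^bsub>G\<^esub> K"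
    and fin: "finite B" "B \<noteq> {}" and finS: "finite S"
    and cond: "infinite K \<or> card (B <#>\<^bsub>G\<^esub> S) < card K"
  shows "kappa1 G S \<le> card (B <#>\<^bsub>G\<^esub> S) - card B"
proof -
  interpret group G by (rule grp)
  have sub: "subgroup K G" using Kd generate_is_subgroup[OF SG] by simp
  have SK: "S \<subseteq> K" using Kd generate.incl by (metis subsetI)
  have KG: "K \<subseteq> carrier G" using sub subgroup.subset by blast
  have BG: "B \<subseteq> carrier G" using BK l_coset_subset_G[OF KG b] by blast
  define f where "f = (\<lambda>x. inv b \<otimes> x)"
  define T0 where "T0 = f ` B"
  have injf: "inj_on f (carrier G)" unfolding f_def inj_on_def using b by simp
  have fB: "\<And>x. x \<in> B \<Longrightarrow> f x \<in> K"
  proof -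
    fix x assume "x \<in> B"
    then obtain k where k: "k \<in> K" "x = b \<otimes> k" using BK unfolding l_coset_def by blast
    hence "f x = k" unfolding f_def using b KG by (simp add: m_assoc[symmetric] subsetD)
    thus "f x \<in> K" using k by simp
  qed
  have XK: "T0 \<subseteq> K" unfolding T0_def using fB by blast
  have BSG: "B <#> S \<subseteq> carrier G" using BG SG unfolding set_mult_def by auto
  have finBS: "finite (B <#> S)" using fin(1) finS unfolding set_mult_def
    by (simp add: finite_image_set2)
  have BBS: "B \<subseteq> B <#> S" unfolding set_mult_def using one BG by force
  have img: "Image (cay_arcs G K S) T0 = f ` (B <#> S)"
  proof
    show "Image (cay_arcs G K S) T0 \<subseteq> f ` (B <#> S)"
    proof
      fix y assume "y \<in> Image (cay_arcs G K S) T0"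
      then obtain x where x: "x \<in> T0" "y \<in> K" "inv x \<otimes> y \<in> S"
        unfolding cay_arcs_def by auto
      then obtain a where a: "a \<in> B" "x = f a" unfolding T0_def by auto
      define s where "s = inv x \<otimes> y"
      have xG: "x \<in> carrier G" using x XK KG by auto
      have yG: "y \<in> carrier G" using x KG by auto
      have aG: "a \<in> carrier G" using a BG by auto
      have "y = x \<otimes> s" unfolding s_def using xG yG by (simp add: m_assoc[symmetric])
      also have "\<dots> = f (a \<otimes> s)" unfolding a f_def s_def using aG b xG yG
        by (simp add: m_assoc)
      finally have "y = f (a \<otimes> s)" .
      moreover have "a \<otimes> s \<in> B <#> S" unfolding set_mult_def s_def using a x by auto
      ultimately show "y \<in> f ` (B <#> S)" by blast
    qed
  next
    show "f ` (B <#> S) \<subseteq> Image (cay_arcs G K S) T0"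
    proof
      fix y assume "y \<in> f ` (B <#> S)"
      then obtain a s where as: "a \<in> B" "s \<in> S" "y = f (a \<otimes> s)"
        unfolding set_mult_def by auto
      have aG: "a \<in> carrier G" using as BG by auto
      have sG: "s \<in> carrier G" using as SG by auto
      have xK: "f a \<in> K" using fB as by auto
      have y2: "y = f a \<otimes> s" using as aG sG b unfolding f_def by (simp add: m_assoc)
      have yK: "y \<in> K" using y2 xK as SK subgroup.m_closed[OF sub] by auto
      have "inv (f a) \<otimes> y = s" using y2 xK KG sG by (simp add: m_assoc[symmetric] subsetD)
      hence "(f a, y) \<in> cay_arcs G K S" unfolding cay_arcs_def using xK yK as by auto
      moreover have "f a \<in> T0" unfolding T0_def using as by auto
      ultimately show "y \<in> Image (cay_arcs G K S) T0" by blast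
    qed
  qed
  have cardimg: "card (f ` (B <#> S)) = card (B <#> S)"
    using card_image inj_on_subset[OF injf BSG] by blast
  have neq: "Image (cay_arcs G K S) T0 \<noteq> K"
  proof
    assume eq: "Image (cay_arcs G K S) T0 = K"
    show False using cond
    proof
      assume "infinite K" thus False using eq img finBS by (metis finite_imageI)
    next
      assume "card (B <#> S) < card K" thus False using eq img cardimg by simp
    qed
  qed
  have Xprop: "finite T0 \<and> T0 \<noteq> {} \<and> T0 \<subseteq> K \<and> Image (cay_arcs G K S) T0 \<noteq> K"
    using fin XK neq unfolding T0_def by auto
  have bd0: "graph_boundary (cay_arcs G K S) T0 = f ` (B <#> S) - T0"
    unfolding graph_boundary_def img ..
  have bd: "graph_boundary (cay_arcs G K S) T0 = f ` ((B <#> S) - B)"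
  proof -
    have "f ` (B <#> S) - T0 = f ` ((B <#> S) - B)" unfolding T0_def
      using inj_on_image_set_diff[OF injf _ BG, of "B <#> S"] BSG by auto
    thus ?thesis using bd0 by simp
  qed
  have cbd: "card (graph_boundary (cay_arcs G K S) T0) = card (B <#> S) - card B"
    unfolding bd using card_image inj_on_subset[OF injf] BSG card_Diff_subset[OF finite_subset[OF BBS finBS] BBS] 
    by (metis Diff_subset subset_trans)
  have "kappa1 G S = (INF Y\<in>{Y. finite Y \<and> Y \<noteq> {} \<and> Y \<subseteq> K \<and> Image (cay_arcs G K S) Y \<noteq> K}.
          card (graph_boundary (cay_arcs G K S) Y))"
    unfolding kappa1_def kappa1_graph_def Kd[symmetric] using Xprop by auto
  also have "\<dots> \<le> card (graph_boundary (cay_arcs G K S) T0)"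
    by (rule cINF_lower) (use Xprop in auto)
  finally show ?thesis using cbd by simp
qed


theorem mainTheorem8:
  fixes G (structure) and A S :: "'a set"
  assumes "group G"
    and "A \<subseteq> carrier G" and "finite A" and "A \<noteq> {}"
    and "S \<subseteq> carrier G" and "finite S" and "S \<noteq> {}" and "\<one> \<in> S"
  defines "K \<equiv> generate G S"
  defines "W \<equiv> {C \<in> left_decomp_index G K A.
                  infinite K \<or> card ((A \<inter> C) <#> S) < card K}"
  shows "int (card W) * int (kappa1 G S) \<le> int (card (A <#> S)) - int (card A)"
proof -
  interpret group G by (rule assms(1))
  note AG = assms(2) and SG = assms(5)
  have sub: "subgroup K G" using K_def generate_is_subgroup[OF SG] by simp
  have SK: "S \<subseteq> K" using K_def generate.incl by (metis subsetI)
  have KG: "K \<subseteq> carrier G" using sub subgroup.subset by blast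
  define I where "I = left_decomp_index G K A"
  have Irep: "\<And>C x. C \<in> I \<Longrightarrow> x \<in> C \<Longrightarrow> x \<in> carrier G \<and> C = x <# K"
  proof -
    fix C x assume C: "C \<in> I" and x: "x \<in> C"
    then obtain a where a: "a \<in> carrier G" "C = a <# K"
      unfolding I_def left_decomp_index_def by auto
    have "x \<in> carrier G" using l_coset_carrier[OF _ a(1) sub] x a by auto
    moreover have "C = x <# K" using l_repr_independence[OF _ a(1) sub] x a by auto
    ultimately show "x \<in> carrier G \<and> C = x <# K" by blast
  qed
  have selfco: "\<And>x. x \<in> carrier G \<Longrightarrow> x \<in> x <# K"
    unfolding l_coset_def using subgroup.one_closed[OF sub] by force
  have AinI: "\<And>x. x \<in> A \<Longrightarrow> x <# K \<in> I"
    unfolding I_def left_decomp_index_def using AG selfco by blast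
  have finI: "finite I"
  proof -
    have "I \<subseteq> (\<lambda>x. x <# K) ` A"
    proof
      fix C assume C: "C \<in> I"
      then obtain x where x: "x \<in> A" "x \<in> C"
        unfolding I_def left_decomp_index_def by auto
      thus "C \<in> (\<lambda>x. x <# K) ` A" using Irep[OF C x(2)] by auto
    qed
    thus ?thesis using assms(3) finite_subset by blast
  qed
  have disj: "\<And>C1 C2. C1 \<in> I \<Longrightarrow> C2 \<in> I \<Longrightarrow> C1 \<noteq> C2 \<Longrightarrow> C1 \<inter> C2 = {}"
    using Irep by blast
  have prodsub: "\<And>C. C \<in> I \<Longrightarrow> (A \<inter> C) <#> S \<subseteq> C"
  proof
    fix C y assume C: "C \<in> I" and y: "y \<in> (A \<inter> C) <#> S"
    then obtain a s where as: "a \<in> A \<inter> C" "s \<in> S" "y = a \<otimes> s"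
      unfolding set_mult_def by auto
    have CC: "C = a <# K" and aG: "a \<in> carrier G" using Irep[OF C] as by auto
    have "y \<in> a <# K" unfolding l_coset_def using as SK by auto
    thus "y \<in> C" using CC by simp
  qed
  have Aun: "A = (\<Union>C\<in>I. A \<inter> C)" using AinI AG selfco by blast
  have ASun: "A <#> S = (\<Union>C\<in>I. (A \<inter> C) <#> S)"
  proof
    show "A <#> S \<subseteq> (\<Union>C\<in>I. (A \<inter> C) <#> S)"
    proof
      fix y assume "y \<in> A <#> S"
      then obtain a s where as: "a \<in> A" "s \<in> S" "y = a \<otimes> s"
        unfolding set_mult_def by auto
      have "a \<in> A \<inter> (a <# K)" using as AG selfco by auto
      hence "y \<in> (A \<inter> (a <# K)) <#> S" unfolding set_mult_def using as by auto
      thus "y \<in> (\<Union>C\<in>I. (A \<inter> C) <#> S)" using AinI[OF as(1)] by blast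
    qed
  next
    show "(\<Union>C\<in>I. (A \<inter> C) <#> S) \<subseteq> A <#> S" unfolding set_mult_def by blast
  qed
  have finAC: "\<And>C. finite (A \<inter> C)" using assms(3) by simp
  have finACS: "\<And>C. finite ((A \<inter> C) <#> S)"
    using finAC assms(6) unfolding set_mult_def by (simp add: finite_image_set2)
  have cA: "card A = (\<Sum>C\<in>I. card (A \<inter> C))"
    apply (subst Aun) apply (rule card_UN_disjoint[OF finI])
    using finAC disj by blast+
  have cAS: "card (A <#> S) = (\<Sum>C\<in>I. card ((A \<inter> C) <#> S))"
    apply (subst ASun) apply (rule card_UN_disjoint[OF finI])
    using finACS apply blast
    using disj prodsub by blast
  have le: "\<And>C. card (A \<inter> C) \<le> card ((A \<inter> C) <#> S)"
  proof -
    fix C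
    have "A \<inter> C \<subseteq> (A \<inter> C) <#> S"
      unfolding set_mult_def using assms(8) AG by force
    thus "card (A \<inter> C) \<le> card ((A \<inter> C) <#> S)" using card_mono finACS by blast
  qed
  define g where "g = (\<lambda>C. int (card ((A \<inter> C) <#> S)) - int (card (A \<inter> C)))"
  have WI: "W \<subseteq> I" unfolding W_def I_def by auto
  have kW: "\<And>C. C \<in> W \<Longrightarrow> int (kappa1 G S) \<le> g C"
  proof -
    fix C assume C: "C \<in> W"
    hence CI: "C \<in> I" and cond: "infinite K \<or> card ((A \<inter> C) <#> S) < card K"
      unfolding W_def I_def by auto
    obtain x where x: "x \<in> A" "x \<in> C"
      using CI unfolding I_def left_decomp_index_def by auto
    have CC: "C = x <# K" and xG: "x \<in> carrier G" using Irep[OF CI x(2)] by auto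
    have "kappa1 G S \<le> card ((A \<inter> C) <#> S) - card (A \<inter> C)"
      apply (rule per_coset[OF assms(1) SG assms(8) K_def[THEN meta_eq_to_obj_eq] xG])
      using CC x finAC cond assms(6) by auto
    thus "int (kappa1 G S) \<le> g C" unfolding g_def using le[of C] by linarith
  qed
  have "int (card W) * int (kappa1 G S) = (\<Sum>C\<in>W. int (kappa1 G S))" by simp
  also have "\<dots> \<le> (\<Sum>C\<in>W. g C)" by (rule sum_mono) (rule kW)
  also have "\<dots> \<le> (\<Sum>C\<in>I. g C)"
    by (rule sum_mono2[OF finI WI]) (use le in \<open>simp add: g_def\<close>)
  also have "\<dots> = int (card (A <#> S)) - int (card A)"
    unfolding g_def cA cAS by (simp add: sum_subtractf)
  finally show ?thesis by simp
qed

end
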